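(* Let $b\ge3$, $2\le j\le b-1$ and $0<\epsilon<\frac1b$. Then $\widehat M_1$ is attained, up to applying a common permutation to the coordinates of $p$ and $q$ and up to interchanging $p$ and $q$, at a pair of the form $p=(\epsilon^{(l_1)},\alpha^{(l_2)},\beta^{(b-l_1-l_2)})$, $q=(\delta^{(l_1)},\epsilon^{(l_2)},\eta^{(b-l_1-l_2)})$, with nonnegative integers $l_1,l_2$, $\alpha,\beta,\delta,\eta\ge\epsilon$ and $l_1\epsilon+l_2\alpha+(b-l_1-l_2)\beta=1=l_1\delta+l_2\epsilon+(b-l_1-l_2)\eta$.
   Context: For an integer $1\le j\le b-1$ and vectors $p,q\in\mathbb R^b$, $$\Psi_j(p;q)=\frac{1}{(b-j-1)!}\sum_{\sigma\in S_b}\Big(p_{\sigma(1)}\cdots p_{\sigma(j)}\,q_{\sigma(j+1)}+q_{\sigma(1)}\cdots q_{\sigma(j)}\,p_{\sigma(j+1)}\Big),$$ where $S_b$ is the set of permutations of $\{1,\dots,b\}$. $x^{(m)}$ denotes $m$ consecutive coordinates equal to $x$. Let $\mathcal P_b$ be the set of probability vectors in $\mathbb R^b$, $\widehat{\mathcal P}_b^0=\{p\in\mathcal P_b:p_i\ge\epsilon\ \forall i\}$ and $\widehat M_1=\sup_{p,q\in\widehat{\mathcal P}_b^0}\Psi_j(p;q)$. *)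

theory Defs
  imports "HOL-Analysis.Analysis" "HOL-Combinatorics.Permutations"
begin

text \<open>Vectors in R^b are represented as functions nat => real; only the
coordinates 0,...,b-1 are relevant (coordinate i+1 of the paper is index i here).\<close>

definition Psi :: "nat \<Rightarrow> nat \<Rightarrow> (nat \<Rightarrow> real) \<Rightarrow> (nat \<Rightarrow> real) \<Rightarrow> real" where
  "Psi b j p q = (1 / fact (b - j - 1)) *
     (\<Sum>\<sigma> | \<sigma> permutes {..<b}.
        (\<Prod>i<j. p (\<sigma> i)) * q (\<sigma> j) + (\<Prod>i<j. q (\<sigma> i)) * p (\<sigma> j))"

definition prob_vecs :: "nat \<Rightarrow> (nat \<Rightarrow> real) set" where
  "prob_vecs b = {p. (\<forall>i<b. 0 \<le> p i) \<and> (\<Sum>i<b. p i) = 1}"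

definition prob_vecs_eps :: "nat \<Rightarrow> real \<Rightarrow> (nat \<Rightarrow> real) set" where
  "prob_vecs_eps b \<epsilon> = {p \<in> prob_vecs b. \<forall>i<b. \<epsilon> \<le> p i}"

definition M1hat :: "nat \<Rightarrow> nat \<Rightarrow> real \<Rightarrow> real" where
  "M1hat b j \<epsilon> = (SUP pq \<in> prob_vecs_eps b \<epsilon> \<times> prob_vecs_eps b \<epsilon>. Psi b j (fst pq) (snd pq))"

definition block3 :: "nat \<Rightarrow> nat \<Rightarrow> real \<Rightarrow> real \<Rightarrow> real \<Rightarrow> nat \<Rightarrow> real" where
  "block3 l1 l2 x y z i = (if i < l1 then x else if i < l1 + l2 then y else z)"

end

theory Submission
  imports Defs
begin


lemma Psi_perm:
  assumes "\<tau> permutes {..<b}"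
  shows "Psi b j (p \<circ> \<tau>) (q \<circ> \<tau>) = Psi b j p q"
proof -
  let ?F = "\<lambda>\<sigma>. (\<Prod>i<j. p (\<sigma> i)) * q (\<sigma> j) + (\<Prod>i<j. q (\<sigma> i)) * p (\<sigma> j)"
  have "sum ?F {\<sigma>. \<sigma> permutes {..<b}} = sum (\<lambda>\<sigma>. ?F (\<tau> \<circ> \<sigma>)) {\<sigma>. \<sigma> permutes {..<b}}"
    by (rule setum_permutations_compose_left[OF assms])
  then show ?thesis unfolding Psi_def by (simp add: o_def)
qed

lemma Psi_swap: "Psi b j p q = Psi b j q p"
  unfolding Psi_def by (simp add: add.commute)

definition qc :: "nat set \<Rightarrow> (nat\<Rightarrow>real) \<Rightarrow> (nat\<Rightarrow>real) \<Rightarrow> real" where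
 "qc I c d = (if card {i\<in>I. d i \<noteq> 0} = 2 then (\<Prod>i\<in>{i\<in>I. d i\<noteq>0}. d i) * (\<Prod>i\<in>{i\<in>I. d i = 0}. c i) else 0)"

lemma prod_quad:
  assumes "finite I" "card {i\<in>I. d i \<noteq> 0} \<le> 2"
  shows "\<exists>A B. \<forall>t. (\<Prod>i\<in>I. c i + t * d i) = A + B*t + qc I c d * t^2"
proof -
  define N where "N = {i\<in>I. d i \<noteq> 0}"
  define Z where "Z = {i\<in>I. d i = 0}"
  define P where "P = (\<Prod>i\<in>Z. c i)"
  have fN: "finite N" "finite Z" using assms(1) by (auto simp: N_def Z_def)
  have IZ: "I = N \<union> Z" "N \<inter> Z = {}" by (auto simp: N_def Z_def)
  have split: "(\<Prod>i\<in>I. c i + t * d i) = (\<Prod>i\<in>N. c i + t * d i) * P" for t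
  proof -
    have "(\<Prod>i\<in>I. c i + t * d i) = (\<Prod>i\<in>N. c i + t * d i) * (\<Prod>i\<in>Z. c i + t * d i)"
      using IZ fN by (simp add: prod.union_disjoint)
    moreover have "(\<Prod>i\<in>Z. c i + t * d i) = P" unfolding P_def by (rule prod.cong) (auto simp: Z_def)
    ultimately show ?thesis by simp
  qed
  have cN: "card N \<le> 2" using assms(2) by (simp add: N_def)
  have qcv: "qc I c d = (if card N = 2 then (\<Prod>i\<in>N. d i) * P else 0)"
    by (simp add: qc_def N_def P_def Z_def)
  consider "card N = 0" | "card N = 1" | "card N = 2" using cN by linarith
  then show ?thesis
  proof cases
    case 1
    then have "N = {}" using fN by simp
    then show ?thesis using split 1 by (intro exI[of _ P] exI[of _ 0]) (simp add: qcv)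
  next
    case 2
    then obtain x where "N = {x}" by (meson card_1_singletonE)
    then show ?thesis using split 2
      by (intro exI[of _ "c x * P"] exI[of _ "d x * P"]) (simp add: qcv algebra_simps)
  next
    case 3
    then obtain x y where xy: "N = {x, y}" "x \<noteq> y" by (meson card_2_iff)
    then show ?thesis using split 3
      by (intro exI[of _ "c x * c y * P"] exI[of _ "(c x * d y + d x * c y) * P"])
         (simp add: qcv algebra_simps power2_eq_square)
  qed
qed



definition cf :: "(nat\<Rightarrow>real) \<Rightarrow> (nat\<Rightarrow>real) \<Rightarrow> nat \<Rightarrow> (nat\<Rightarrow>nat) \<Rightarrow> nat \<Rightarrow> real" where
 "cf u v j \<sigma> i = (if i < j then u (\<sigma> i) else v (\<sigma> i))"

lemma prod_cf: "(\<Prod>i<Suc j. cf u v j \<sigma> i) = (\<Prod>i<j. u (\<sigma> i)) * v (\<sigma> j)"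
proof -
  have "(\<Prod>i<j. cf u v j \<sigma> i) = (\<Prod>i<j. u (\<sigma> i))" by (rule prod.cong) (auto simp: cf_def)
  then show ?thesis by (simp add: cf_def)
qed

lemma Psi_cf: "Psi b j p q = (1/fact(b-j-1)) * (\<Sum>\<sigma> | \<sigma> permutes {..<b}.
     (\<Prod>i<Suc j. cf p q j \<sigma> i) + (\<Prod>i<Suc j. cf q p j \<sigma> i))"
  unfolding Psi_def prod_cf by simp

definition CQ :: "nat \<Rightarrow> nat \<Rightarrow> (nat\<Rightarrow>real) \<Rightarrow> (nat\<Rightarrow>real) \<Rightarrow> (nat\<Rightarrow>real) \<Rightarrow> (nat\<Rightarrow>real) \<Rightarrow> real" where
 "CQ b j p0 dp q0 dq = (1/fact(b-j-1)) * (\<Sum>\<sigma> | \<sigma> permutes {..<b}.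
     qc {..<Suc j} (cf p0 q0 j \<sigma>) (cf dp dq j \<sigma>) + qc {..<Suc j} (cf q0 p0 j \<sigma>) (cf dq dp j \<sigma>))"

lemma card_cf_le:
  assumes "\<sigma> permutes {..<b}" "\<forall>x. dp x \<noteq> 0 \<longrightarrow> x \<in> {k,l}" "\<forall>x. dq x \<noteq> 0 \<longrightarrow> x \<in> {k,l}"
  shows "card {i\<in>{..<Suc j}. cf dp dq j \<sigma> i \<noteq> 0} \<le> 2"
proof -
  have inj: "inj \<sigma>" using assms(1) by (rule permutes_inj)
  have sub: "{i\<in>{..<Suc j}. cf dp dq j \<sigma> i \<noteq> 0} \<subseteq> {i. \<sigma> i \<in> {k,l}}"
    using assms(2,3) by (auto simp: cf_def split: if_splits)
  have "card {i\<in>{..<Suc j}. cf dp dq j \<sigma> i \<noteq> 0} \<le> card {k,l}"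
    by (rule card_inj_on_le[where f=\<sigma>]) (use inj sub in \<open>auto intro: inj_on_subset\<close>)
  also have "\<dots> \<le> 2" by (simp add: card_insert_if)
  finally show ?thesis .
qed

lemma cf_line: "cf (\<lambda>x. p0 x + t*dp x) (\<lambda>x. q0 x + t*dq x) j \<sigma> i = cf p0 q0 j \<sigma> i + t * cf dp dq j \<sigma> i"
  by (simp add: cf_def)

lemma line_quad:
  fixes p0 dp q0 dq :: "nat \<Rightarrow> real"
  assumes "\<forall>x. dp x \<noteq> 0 \<longrightarrow> x \<in> {k,l}" "\<forall>x. dq x \<noteq> 0 \<longrightarrow> x \<in> {k,l}"
  shows "\<exists>A B. \<forall>t. Psi b j (\<lambda>x. p0 x + t*dp x) (\<lambda>x. q0 x + t*dq x) = A + B*t + CQ b j p0 dp q0 dq * t^2"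
proof -
  define S where "S = {\<sigma>. \<sigma> permutes {..<b}}"
  define C where "C = (\<lambda>\<sigma>. qc {..<Suc j} (cf p0 q0 j \<sigma>) (cf dp dq j \<sigma>) + qc {..<Suc j} (cf q0 p0 j \<sigma>) (cf dq dp j \<sigma>))"
  define T where "T = (\<lambda>\<sigma> t. (\<Prod>i<Suc j. cf (\<lambda>x. p0 x + t*dp x) (\<lambda>x. q0 x + t*dq x) j \<sigma> i)
              + (\<Prod>i<Suc j. cf (\<lambda>x. q0 x + t*dq x) (\<lambda>x. p0 x + t*dp x) j \<sigma> i))"
  have "\<forall>\<sigma>\<in>S. \<exists>AB::real\<times>real. \<forall>t. T \<sigma> t = fst AB + snd AB*t + C \<sigma> * t^2"
  proof
    fix \<sigma> assume "\<sigma> \<in> S"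
    then have sp: "\<sigma> permutes {..<b}" by (simp add: S_def)
    have "\<exists>A B. \<forall>t. (\<Prod>i<Suc j. cf p0 q0 j \<sigma> i + t * cf dp dq j \<sigma> i)
        = A + B*t + qc {..<Suc j} (cf p0 q0 j \<sigma>) (cf dp dq j \<sigma>) * t^2"
      by (rule prod_quad[OF finite_lessThan card_cf_le[OF sp assms]])
    then obtain A1 B1 where 1: "\<forall>t. (\<Prod>i<Suc j. cf p0 q0 j \<sigma> i + t * cf dp dq j \<sigma> i)
        = A1 + B1*t + qc {..<Suc j} (cf p0 q0 j \<sigma>) (cf dp dq j \<sigma>) * t^2" by (elim exE)
    have "\<exists>A B. \<forall>t. (\<Prod>i<Suc j. cf q0 p0 j \<sigma> i + t * cf dq dp j \<sigma> i)
        = A + B*t + qc {..<Suc j} (cf q0 p0 j \<sigma>) (cf dq dp j \<sigma>) * t^2"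
      by (rule prod_quad[OF finite_lessThan card_cf_le[OF sp assms(2,1)]])
    then obtain A2 B2 where 2: "\<forall>t. (\<Prod>i<Suc j. cf q0 p0 j \<sigma> i + t * cf dq dp j \<sigma> i)
        = A2 + B2*t + qc {..<Suc j} (cf q0 p0 j \<sigma>) (cf dq dp j \<sigma>) * t^2" by (elim exE)
    show "\<exists>AB::real\<times>real. \<forall>t. T \<sigma> t = fst AB + snd AB*t + C \<sigma> * t^2"
    proof (rule exI[of _ "(A1+A2, B1+B2)"], intro allI)
      fix t
      have e1: "(\<Prod>i<Suc j. cf (\<lambda>x. p0 x + t*dp x) (\<lambda>x. q0 x + t*dq x) j \<sigma> i)
           = (\<Prod>i<Suc j. cf p0 q0 j \<sigma> i + t * cf dp dq j \<sigma> i)" by (simp only: cf_line)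
      have e2: "(\<Prod>i<Suc j. cf (\<lambda>x. q0 x + t*dq x) (\<lambda>x. p0 x + t*dp x) j \<sigma> i)
           = (\<Prod>i<Suc j. cf q0 p0 j \<sigma> i + t * cf dq dp j \<sigma> i)" by (simp only: cf_line)
      show "T \<sigma> t = fst (A1+A2, B1+B2) + snd (A1+A2, B1+B2) * t + C \<sigma> * t^2"
        unfolding T_def C_def e1 e2 1[rule_format] 2[rule_format] by (simp add: algebra_simps)
    qed
  qed
  then obtain f where fAB: "\<forall>\<sigma>\<in>S. \<forall>t. T \<sigma> t = fst (f \<sigma>) + snd (f \<sigma>)*t + C \<sigma> * t^2"
    by (rule bchoice[elim_format]) blast
  show ?thesis
  proof (intro exI allI)
    fix t
    have "Psi b j (\<lambda>x. p0 x + t*dp x) (\<lambda>x. q0 x + t*dq x) = (1/fact(b-j-1)) * (\<Sum>\<sigma>\<in>S. T \<sigma> t)"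
      unfolding Psi_cf S_def T_def ..
    also have "(\<Sum>\<sigma>\<in>S. T \<sigma> t) = (\<Sum>\<sigma>\<in>S. fst (f \<sigma>) + snd (f \<sigma>)*t + C \<sigma> * t^2)"
      using fAB by (intro sum.cong) auto
    also have "\<dots> = (\<Sum>\<sigma>\<in>S. fst (f \<sigma>)) + (\<Sum>\<sigma>\<in>S. snd (f \<sigma>)) * t + sum C S * t^2"
      by (simp only: sum.distrib sum_distrib_right)
    finally show "Psi b j (\<lambda>x. p0 x + t*dp x) (\<lambda>x. q0 x + t*dq x) =
      (1/fact(b-j-1)) * (\<Sum>\<sigma>\<in>S. fst (f \<sigma>)) + (1/fact(b-j-1)) * (\<Sum>\<sigma>\<in>S. snd (f \<sigma>)) * t + CQ b j p0 dp q0 dq * t^2"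
      unfolding CQ_def S_def[symmetric] C_def[symmetric] by (simp only: distrib_left mult.assoc)
  qed
qed



lemma line_form:
  fixes p0 q0 :: "nat \<Rightarrow> real"
  assumes kl: "k < b" "l < b" "k \<noteq> l" and e: "p0 k = p0 l" "q0 k = q0 l"
    and dpd: "dp = (\<lambda>_. 0)(k := (a::real), l := -a)" and dqd: "dq = (\<lambda>_. 0)(k := (c::real), l := -c)"
  shows "Psi b j (\<lambda>x. p0 x + t*dp x) (\<lambda>x. q0 x + t*dq x) =
         Psi b j p0 q0 + CQ b j p0 dp q0 dq * t^2"
proof -
  let ?g = "\<lambda>t. Psi b j (\<lambda>x. p0 x + t*dp x) (\<lambda>x. q0 x + t*dq x)"
  obtain A B where AB: "\<forall>t. ?g t = A + B*t + CQ b j p0 dp q0 dq * t^2"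
  proof -
    have "\<forall>x. dp x \<noteq> 0 \<longrightarrow> x \<in> {k,l}" "\<forall>x. dq x \<noteq> 0 \<longrightarrow> x \<in> {k,l}"
      by (auto simp: dpd dqd)
    from line_quad[OF this, of b j p0 q0] show ?thesis using that by blast
  qed
  have tp: "Transposition.transpose k l permutes {..<b}" using kl by (intro permutes_swap_id) auto
  have refl1: "(\<lambda>x. p0 x + (-s)*dp x) = (\<lambda>x. p0 x + s*dp x) \<circ> Transposition.transpose k l" for s
    using kl e by (auto simp: dpd Transposition.transpose_def fun_eq_iff)
  have refl2: "(\<lambda>x. q0 x + (-s)*dq x) = (\<lambda>x. q0 x + s*dq x) \<circ> Transposition.transpose k l" for s
    using kl e by (auto simp: dqd Transposition.transpose_def fun_eq_iff)
  have "?g (-1) = ?g 1" unfolding refl1 refl2 by (rule Psi_perm[OF tp])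
  moreover have "?g (-1) = A - B + CQ b j p0 dp q0 dq" using AB[rule_format, of "-1"] by simp
  moreover have "?g 1 = A + B + CQ b j p0 dp q0 dq" using AB[rule_format, of "1"] by simp
  ultimately have "B = 0" by simp
  moreover have "?g 0 = A" using AB[rule_format, of 0] by simp
  ultimately show ?thesis using AB by simp
qed



lemma sum_two:
  assumes "finite A" "k \<in> A" "l \<in> A" "k \<noteq> l" "\<forall>x\<in>A-{k,l}. f x = g x" "f k + f l = g k + g l"
  shows "sum f A = sum (g::nat \<Rightarrow> real) A"
proof -
  have r: "sum h A = h k + h l + sum h (A - {k,l})" for h :: "nat \<Rightarrow> real"
  proof -
    have "sum h A = h k + sum h (A - {k})" using assms by (simp add: sum.remove)
    also have "sum h (A - {k}) = h l + sum h (A - {k} - {l})" using assms by (simp add: sum.remove)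
    finally show ?thesis by (simp add: Diff_insert2[symmetric] insert_commute)
  qed
  have "sum f (A - {k,l}) = sum g (A - {k,l})" using assms(5) by (intro sum.cong) auto
  then show ?thesis using r[of f] r[of g] assms(6) by simp
qed

lemma line_feas:
  assumes p: "p \<in> prob_vecs_eps b \<epsilon>" and e0: "0 \<le> \<epsilon>" and kl: "k < b" "l < b" "k \<noteq> l"
    and m: "m = (p k + p l)/2" and a: "a = (p k - p l)/2"
    and h1: "\<epsilon> \<le> m + t*a" and h2: "\<epsilon> \<le> m - t*a"
  shows "(\<lambda>x. (p(k := m, l := m)) x + t * ((\<lambda>_. 0)(k := a, l := -a)) x) \<in> prob_vecs_eps b \<epsilon>"
proof -
  let ?f = "\<lambda>x. (p(k := m, l := m)) x + t * ((\<lambda>_. 0)(k := a, l := -a)) x"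
  have pv: "\<forall>i<b. \<epsilon> \<le> p i" "(\<Sum>i<b. p i) = 1"
    using p by (auto simp: prob_vecs_eps_def prob_vecs_def)
  have ge: "\<forall>i<b. \<epsilon> \<le> ?f i" using pv(1) h1 h2 kl by auto
  have "sum ?f {..<b} = sum p {..<b}"
    by (rule sum_two[of _ k l]) (use kl m a in auto)
  then show ?thesis using ge pv e0 by (auto simp: prob_vecs_eps_def prob_vecs_def intro: order_trans)
qed

lemma line_one:
  assumes "k \<noteq> l" "m = (p k + p l)/2" "a = (p k - p l)/2"
  shows "(\<lambda>x. (p(k := m, l := m)) x + 1 * ((\<lambda>_. 0)(k := a, l := -a)) x) = (p::nat\<Rightarrow>real)"
proof
  fix x show "(p(k := m, l := m)) x + 1 * ((\<lambda>_. 0)(k := a, l := -a)) x = p x"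
    using assms by (cases "x = k"; cases "x = l") auto
qed

lemma qc_first_zero:
  "qc {..<Suc j} (cf u v j \<sigma>) (cf (\<lambda>_. 0) w j \<sigma>) = 0"
proof -
  have "{i\<in>{..<Suc j}. cf (\<lambda>_. 0) w j \<sigma> i \<noteq> 0} \<subseteq> {j}" by (auto simp: cf_def)
  then have "card {i\<in>{..<Suc j}. cf (\<lambda>_. 0) w j \<sigma> i \<noteq> 0} \<le> card {j}" by (intro card_mono) auto
  then show ?thesis by (auto simp: qc_def)
qed

lemma qc_second:
  assumes sp: "\<sigma> permutes {..<b}" and jb: "j < b" and kl: "k \<noteq> l"
    and u: "\<forall>i<b. 0 < u i" and v: "\<forall>i<b. 0 < v i"
    and dq: "dq = (\<lambda>_. 0)(k := c, l := -c)"
  shows "qc {..<Suc j} (cf u v j \<sigma>) (cf dq (\<lambda>_. 0) j \<sigma>) \<le> 0"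
    and "c \<noteq> 0 \<Longrightarrow> \<sigma> 0 = k \<Longrightarrow> \<sigma> 1 = l \<Longrightarrow> 2 \<le> j \<Longrightarrow> qc {..<Suc j} (cf u v j \<sigma>) (cf dq (\<lambda>_. 0) j \<sigma>) < 0"
proof -
  define N where "N = {i\<in>{..<Suc j}. cf dq (\<lambda>_. 0) j \<sigma> i \<noteq> 0}"
  define Z where "Z = {i\<in>{..<Suc j}. cf dq (\<lambda>_. 0) j \<sigma> i = 0}"
  have inj: "inj \<sigma>" using sp by (rule permutes_inj)
  have Nsub: "\<sigma> ` N \<subseteq> {k,l}" and Nlt: "\<forall>i\<in>N. i < j"
    by (auto simp: N_def cf_def dq split: if_splits)
  have Zpos: "(\<Prod>i\<in>Z. cf u v j \<sigma> i) > 0"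
  proof (rule prod_pos)
    fix i assume "i \<in> Z"
    then have "i \<le> j" by (auto simp: Z_def)
    then have "\<sigma> i < b" using permutes_in_image[OF sp] jb by auto
    then show "0 < cf u v j \<sigma> i" using u v by (auto simp: cf_def)
  qed
  have key: "card N = 2 \<Longrightarrow> (\<Prod>i\<in>N. cf dq (\<lambda>_. 0) j \<sigma> i) = - (c * c)"
  proof -
    assume c2: "card N = 2"
    have fN: "finite N" by (simp add: N_def)
    have injN: "inj_on \<sigma> N" using inj by (rule inj_on_subset) simp
    have "card (\<sigma> ` N) = 2" using c2 card_image[OF injN] by simp
    then have img: "\<sigma> ` N = {k,l}" using Nsub kl
      by (intro card_subset_eq) auto
    have "(\<Prod>i\<in>N. cf dq (\<lambda>_. 0) j \<sigma> i) = (\<Prod>i\<in>N. dq (\<sigma> i))"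
      using Nlt by (intro prod.cong) (auto simp: cf_def)
    also have "\<dots> = (\<Prod>x\<in>\<sigma> ` N. dq x)" using prod.reindex[OF injN, of dq] by simp
    also have "\<dots> = dq k * dq l" using img kl by simp
    also have "\<dots> = - (c * c)" using kl by (simp add: dq power2_eq_square)
    finally show ?thesis .
  qed
  have qcv: "qc {..<Suc j} (cf u v j \<sigma>) (cf dq (\<lambda>_. 0) j \<sigma>) =
     (if card N = 2 then (\<Prod>i\<in>N. cf dq (\<lambda>_. 0) j \<sigma> i) * (\<Prod>i\<in>Z. cf u v j \<sigma> i) else 0)"
    by (simp add: qc_def N_def Z_def)
  show "qc {..<Suc j} (cf u v j \<sigma>) (cf dq (\<lambda>_. 0) j \<sigma>) \<le> 0"
    using key Zpos unfolding qcv by (auto intro: mult_nonpos_nonneg)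
  assume c: "c \<noteq> 0" and s0: "\<sigma> 0 = k" and s1: "\<sigma> 1 = l" and j2: "2 \<le> j"
  have "{0,1} \<subseteq> N" using c s0 s1 j2 kl by (auto simp: N_def cf_def dq)
  moreover have "finite N" by (simp add: N_def)
  ultimately have "card {0::nat,1} \<le> card N" by (intro card_mono)
  then have "2 \<le> card N" by simp
  moreover have "card N \<le> 2" unfolding N_def
    by (rule card_cf_le[OF sp, of dq k l]) (auto simp: dq)
  ultimately have c2: "card N = 2" by simp
  have "c * c > 0" using c by (simp add: zero_less_mult_iff linorder_neq_iff disj_commute)
  then show "qc {..<Suc j} (cf u v j \<sigma>) (cf dq (\<lambda>_. 0) j \<sigma>) < 0"
    using key[OF c2] Zpos c2 unfolding qcv by (simp add: mult_neg_pos)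
qed



definition ismax :: "nat \<Rightarrow> nat \<Rightarrow> real \<Rightarrow> (nat\<Rightarrow>real) \<Rightarrow> (nat\<Rightarrow>real) \<Rightarrow> bool" where
  "ismax b j \<epsilon> p q \<longleftrightarrow> p \<in> prob_vecs_eps b \<epsilon> \<and> q \<in> prob_vecs_eps b \<epsilon> \<and>
     (\<forall>p' q'. p' \<in> prob_vecs_eps b \<epsilon> \<longrightarrow> q' \<in> prob_vecs_eps b \<epsilon> \<longrightarrow> Psi b j p' q' \<le> Psi b j p q)"

definition icard :: "nat \<Rightarrow> real \<Rightarrow> (nat\<Rightarrow>real) \<Rightarrow> (nat\<Rightarrow>real) \<Rightarrow> nat" where
  "icard b \<epsilon> p q = card {i\<in>{..<b}. \<epsilon> < p i \<and> \<epsilon> < q i}"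

lemma ismax_swap: "ismax b j \<epsilon> p q \<Longrightarrow> ismax b j \<epsilon> q p"
  unfolding ismax_def by (metis Psi_swap)

lemma sum_neg_witness:
  assumes "finite S" "x \<in> S" "\<forall>y\<in>S. g y \<le> (0::real)" "g x < 0"
  shows "sum g S < 0"
proof -
  have "sum g S = g x + sum g (S - {x})" using assms by (simp add: sum.remove)
  moreover have "sum g (S - {x}) \<le> 0" using assms(3) by (intro sum_nonpos) auto
  ultimately show ?thesis using assms(4) by simp
qed

lemma perm_exists:
  fixes k l b :: nat
  assumes "k < b" "l < b" "k \<noteq> l" "1 < b"
  shows "\<exists>\<sigma>. \<sigma> permutes {..<b} \<and> \<sigma> 0 = k \<and> \<sigma> 1 = l"
proof -
  define m where "m = Transposition.transpose 0 k l"
  have m0: "m \<noteq> 0" using assms(3) by (auto simp: m_def Transposition.transpose_def)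
  have mb: "m < b" using assms by (auto simp: m_def Transposition.transpose_def)
  have b0: "0 < b" using assms(4) by simp
  define \<sigma> where "\<sigma> = Transposition.transpose 0 k \<circ> Transposition.transpose 1 m"
  have "\<sigma> permutes {..<b}" unfolding \<sigma>_def
    by (intro permutes_compose permutes_swap_id) (use assms mb b0 in simp_all)
  moreover have "\<sigma> 0 = k" using m0 by (auto simp: \<sigma>_def Transposition.transpose_def)
  moreover have "\<sigma> 1 = l" using m0 assms(3) by (auto simp: \<sigma>_def m_def Transposition.transpose_def)
  ultimately show ?thesis by blast
qed

lemma block1:
  assumes mx: "ismax b j \<epsilon> p q" and e: "0 < \<epsilon>" and j: "2 \<le> j" "j < b"
    and kl: "k < b" "l < b" "k \<noteq> l" and pe: "p k = p l"
  shows "q k = q l"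
proof (rule ccontr)
  assume ne: "q k \<noteq> q l"
  define m where "m = (q k + q l)/2"
  define c where "c = (q k - q l)/2"
  define q0 where "q0 = q(k := m, l := m)"
  define dq where "dq = ((\<lambda>_. 0)(k := c, l := -c) :: nat \<Rightarrow> real)"
  define dp where "dp = ((\<lambda>_. 0)(k := 0, l := -0) :: nat \<Rightarrow> real)"
  have dp0: "dp = (\<lambda>_. 0)" by (auto simp: dp_def fun_eq_iff)
  have c0: "c \<noteq> 0" using ne by (simp add: c_def)
  have pF: "p \<in> prob_vecs_eps b \<epsilon>" and qF: "q \<in> prob_vecs_eps b \<epsilon>"
    using mx by (auto simp: ismax_def)
  have pge: "\<forall>i<b. \<epsilon> \<le> p i" "\<forall>i<b. \<epsilon> \<le> q i" using pF qF by (auto simp: prob_vecs_eps_def)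
  have lf: "Psi b j (\<lambda>x. p x + t*dp x) (\<lambda>x. q0 x + t*dq x) = Psi b j p q0 + CQ b j p dp q0 dq * t^2" for t
    by (rule line_form[OF kl pe _ dp_def dq_def]) (simp add: q0_def kl)
  have q1: "(\<lambda>x. q0 x + 1*dq x) = q" unfolding q0_def dq_def by (rule line_one[OF kl(3) m_def c_def])
  have "Psi b j p q = Psi b j p q0 + CQ b j p dp q0 dq"
    using lf[of 1] q1 by (simp add: dp0)
  moreover have q0F: "q0 \<in> prob_vecs_eps b \<epsilon>"
  proof -
    have "(\<lambda>x. (q(k := m, l := m)) x + 0 * ((\<lambda>_. 0)(k := c, l := -c)) x) \<in> prob_vecs_eps b \<epsilon>"
      by (rule line_feas[OF qF _ kl m_def c_def]) (use e pge kl in \<open>auto simp: m_def intro!: add_mono[of \<epsilon> _ \<epsilon>, simplified mult_2_right[symmetric]]\<close>)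
    moreover have "(\<lambda>x. (q(k := m, l := m)) x + 0 * ((\<lambda>_. 0)(k := c, l := -c)) x) = q0"
      by (rule ext) (simp add: q0_def)
    ultimately show ?thesis by simp
  qed
  moreover have "CQ b j p dp q0 dq < 0"
  proof -
    let ?S = "{\<sigma>. \<sigma> permutes {..<b}}"
    let ?g = "\<lambda>\<sigma>. qc {..<Suc j} (cf p q0 j \<sigma>) (cf dp dq j \<sigma>) + qc {..<Suc j} (cf q0 p j \<sigma>) (cf dq dp j \<sigma>)"
    have "\<epsilon> \<le> q k" "\<epsilon> \<le> q l" using pge kl by auto
    then have "\<epsilon> \<le> m" unfolding m_def by (simp add: field_simps)
    then have u: "\<forall>i<b. 0 < q0 i" using pge e kl by (auto simp: q0_def intro: less_le_trans)
    have v: "\<forall>i<b. 0 < p i" using pge e by (auto intro: less_le_trans)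
    have gle: "\<forall>\<sigma>\<in>?S. ?g \<sigma> \<le> 0"
      using qc_second(1)[OF _ j(2) kl(3) u v dq_def] by (simp add: dp0 qc_first_zero)
    obtain \<sigma> where s: "\<sigma> permutes {..<b}" "\<sigma> 0 = k" "\<sigma> 1 = l"
      using perm_exists[OF kl] j by auto
    have "?g \<sigma> < 0"
      using qc_second(2)[OF s(1) j(2) kl(3) u v dq_def c0 s(2,3) j(1)] by (simp add: dp0 qc_first_zero)
    then have "sum ?g ?S < 0"
      by (intro sum_neg_witness[OF finite_permutations _ gle]) (use s in auto)
    then show ?thesis unfolding CQ_def by (simp add: divide_neg_pos)
  qed
  ultimately have "Psi b j p q < Psi b j p q0" by simp
  moreover have "Psi b j p q0 \<le> Psi b j p q" using mx pF q0F by (auto simp: ismax_def)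
  ultimately show False by simp
qed

lemma block2:
  assumes mx: "ismax b j \<epsilon> p q" and e: "0 < \<epsilon>" and j: "2 \<le> j" "j < b"
    and kl: "k < b" "l < b" "k \<noteq> l" and qe: "q k = q l"
  shows "p k = p l"
  using block1[OF ismax_swap[OF mx] e j kl qe] .



lemma T_exists:
  fixes A B X Y :: real
  assumes "0 \<le> A" "0 \<le> B" "A \<noteq> 0 \<or> B \<noteq> 0" "A < X" "B < Y"
  shows "\<exists>T\<ge>1. T*A \<le> X \<and> T*B \<le> Y \<and> (T*A = X \<or> T*B = Y)"
proof (cases "A = 0")
  case True
  then have B: "0 < B" using assms by simp
  show ?thesis using assms True B
    by (intro exI[of _ "Y/B"]) (auto simp: field_simps)
next
  case False
  then have A: "0 < A" using assms by simp
  show ?thesis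
  proof (cases "B = 0")
    case True
    show ?thesis using assms True A
      by (intro exI[of _ "X/A"]) (auto simp: field_simps)
  next
    case False
    then have B: "0 < B" using assms by simp
    show ?thesis
    proof (cases "X/A \<le> Y/B")
      case True
      then show ?thesis using assms A B
        by (intro exI[of _ "X/A"]) (auto simp: field_simps)
    next
      case False
      then show ?thesis using assms A B
        by (intro exI[of _ "Y/B"]) (auto simp: field_simps)
    qed
  qed
qed

lemma block3:
  assumes mx: "ismax b j \<epsilon> p q"
    and mn: "\<forall>p' q'. ismax b j \<epsilon> p' q' \<longrightarrow> icard b \<epsilon> p q \<le> icard b \<epsilon> p' q'"
    and e: "0 < \<epsilon>" and kl: "k < b" "l < b" "k \<noteq> l"
    and gt: "\<epsilon> < p k" "\<epsilon> < p l" "\<epsilon> < q k" "\<epsilon> < q l"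
  shows "p k = p l \<and> q k = q l"
proof (rule ccontr)
  assume ne: "\<not> (p k = p l \<and> q k = q l)"
  define mp where "mp = (p k + p l)/2"
  define a where "a = (p k - p l)/2"
  define mq where "mq = (q k + q l)/2"
  define c where "c = (q k - q l)/2"
  define p0 where "p0 = p(k := mp, l := mp)"
  define q0 where "q0 = q(k := mq, l := mq)"
  define dp where "dp = ((\<lambda>_. 0)(k := a, l := -a) :: nat \<Rightarrow> real)"
  define dq where "dq = ((\<lambda>_. 0)(k := c, l := -c) :: nat \<Rightarrow> real)"
  define C where "C = CQ b j p0 dp q0 dq"
  have pF: "p \<in> prob_vecs_eps b \<epsilon>" and qF: "q \<in> prob_vecs_eps b \<epsilon>"
    using mx by (auto simp: ismax_def)
  have lf: "Psi b j (\<lambda>x. p0 x + t*dp x) (\<lambda>x. q0 x + t*dq x) = Psi b j p0 q0 + C * t^2" for t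
    unfolding C_def by (rule line_form[OF kl _ _ dp_def dq_def]) (simp_all add: p0_def q0_def kl)
  have p1: "(\<lambda>x. p0 x + 1*dp x) = p" unfolding p0_def dp_def by (rule line_one[OF kl(3) mp_def a_def])
  have q1: "(\<lambda>x. q0 x + 1*dq x) = q" unfolding q0_def dq_def by (rule line_one[OF kl(3) mq_def c_def])
  have v1: "Psi b j p q = Psi b j p0 q0 + C" using lf[of 1] p1 q1 by simp
  have Fp: "(\<lambda>x. p0 x + t*dp x) \<in> prob_vecs_eps b \<epsilon>" if "\<epsilon> \<le> mp + t*a" "\<epsilon> \<le> mp - t*a" for t
    unfolding p0_def dp_def by (rule line_feas[OF pF _ kl mp_def a_def that]) (use e in simp)
  have Fq: "(\<lambda>x. q0 x + t*dq x) \<in> prob_vecs_eps b \<epsilon>" if "\<epsilon> \<le> mq + t*c" "\<epsilon> \<le> mq - t*c" for t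
    unfolding q0_def dq_def by (rule line_feas[OF qF _ kl mq_def c_def that]) (use e in simp)
  have X: "\<bar>a\<bar> < mp - \<epsilon>" using gt unfolding a_def mp_def by (simp add: abs_if field_simps)
  have Y: "\<bar>c\<bar> < mq - \<epsilon>" using gt unfolding c_def mq_def by (simp add: abs_if field_simps)
  have "Psi b j p0 q0 \<le> Psi b j p q"
    using Fp[of 0] Fq[of 0] X Y mx by (simp add: ismax_def)
  then have C0: "0 \<le> C" using v1 by simp
  have "\<bar>a\<bar> \<noteq> 0 \<or> \<bar>c\<bar> \<noteq> 0" using ne by (auto simp: a_def c_def)
  then obtain T where T: "1 \<le> T" "T*\<bar>a\<bar> \<le> mp - \<epsilon>" "T*\<bar>c\<bar> \<le> mq - \<epsilon>"
      "T*\<bar>a\<bar> = mp - \<epsilon> \<or> T*\<bar>c\<bar> = mq - \<epsilon>"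
    using T_exists[of "\<bar>a\<bar>" "\<bar>c\<bar>" "mp - \<epsilon>" "mq - \<epsilon>"] X Y by auto
  define P where "P = (\<lambda>x. p0 x + T*dp x)"
  define Q where "Q = (\<lambda>x. q0 x + T*dq x)"
  have "\<bar>T*a\<bar> \<le> mp - \<epsilon>" "\<bar>T*c\<bar> \<le> mq - \<epsilon>" using T by (simp_all add: abs_mult)
  then have PF: "P \<in> prob_vecs_eps b \<epsilon>" and QF: "Q \<in> prob_vecs_eps b \<epsilon>"
    unfolding P_def Q_def by (auto intro!: Fp Fq simp: abs_le_iff)
  have "C * 1 \<le> C * T^2" using C0 T(1) by (intro mult_left_mono) (auto simp: one_le_power)
  then have "Psi b j p q \<le> Psi b j P Q" using lf[of T] v1 unfolding P_def Q_def by simp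
  then have mxPQ: "ismax b j \<epsilon> P Q" using mx PF QF unfolding ismax_def by (auto intro: order_trans)
  define I where "I = {i\<in>{..<b}. \<epsilon> < p i \<and> \<epsilon> < q i}"
  define I' where "I' = {i\<in>{..<b}. \<epsilon> < P i \<and> \<epsilon> < Q i}"
  have same: "P x = p x" "Q x = q x" if "x \<noteq> k" "x \<noteq> l" for x
    using that by (simp_all add: P_def Q_def p0_def q0_def dp_def dq_def)
  have klI: "k \<in> I" "l \<in> I" using kl gt by (auto simp: I_def)
  have sub: "I' \<subseteq> I"
  proof
    fix x assume "x \<in> I'"
    then show "x \<in> I" using same klI by (cases "x = k \<or> x = l") (auto simp: I_def I'_def)
  qed
  have out: "k \<notin> I' \<or> l \<notin> I'"
  proof -
    have Pk: "P k = mp + T*a" and Pl: "P l = mp - T*a" and Qk: "Q k = mq + T*c" and Ql: "Q l = mq - T*c"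
      using kl by (simp_all add: P_def Q_def p0_def q0_def dp_def dq_def)
    from T(4) show ?thesis
    proof
      assume h: "T*\<bar>a\<bar> = mp - \<epsilon>"
      show ?thesis
      proof (cases "0 \<le> a")
        case True then have "P l = \<epsilon>" using h Pl by simp
        then show ?thesis by (simp add: I'_def)
      next
        case False then have "P k = \<epsilon>" using h Pk by simp
        then show ?thesis by (simp add: I'_def)
      qed
    next
      assume h: "T*\<bar>c\<bar> = mq - \<epsilon>"
      show ?thesis
      proof (cases "0 \<le> c")
        case True then have "Q l = \<epsilon>" using h Ql by simp
        then show ?thesis by (simp add: I'_def)
      next
        case False then have "Q k = \<epsilon>" using h Qk by simp
        then show ?thesis by (simp add: I'_def)
      qed
    qed
  qed
  have "I' \<subset> I" using sub out klI by auto
  then have "card I' < card I" by (intro psubset_card_mono) (simp add: I_def)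
  moreover have "card I \<le> card I'" using mn mxPQ unfolding icard_def I_def I'_def by auto
  ultimately show False by simp
qed



definition Rb :: "nat \<Rightarrow> (nat \<Rightarrow> real) \<Rightarrow> nat \<Rightarrow> real" where
  "Rb b f = (\<lambda>i. if i < b then f i else 0)"

lemma Psi_Rb:
  assumes "j < b"
  shows "Psi b j (Rb b p) (Rb b q) = Psi b j p q"
  unfolding Psi_def
proof (intro arg_cong[where f="\<lambda>x. _ * x"] sum.cong refl)
  fix \<sigma> assume "\<sigma> \<in> {\<sigma>. \<sigma> permutes {..<b}}"
  then have lt: "i < b \<Longrightarrow> \<sigma> i < b" for i using permutes_in_image by fastforce
  have "(\<Prod>i<j. Rb b p (\<sigma> i)) = (\<Prod>i<j. p (\<sigma> i))" "(\<Prod>i<j. Rb b q (\<sigma> i)) = (\<Prod>i<j. q (\<sigma> i))"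
    using lt assms by (auto intro!: prod.cong simp: Rb_def)
  moreover have "Rb b p (\<sigma> j) = p (\<sigma> j)" "Rb b q (\<sigma> j) = q (\<sigma> j)"
    using lt assms by (auto simp: Rb_def)
  ultimately show "(\<Prod>i<j. Rb b p (\<sigma> i)) * Rb b q (\<sigma> j) + (\<Prod>i<j. Rb b q (\<sigma> i)) * Rb b p (\<sigma> j) =
       (\<Prod>i<j. p (\<sigma> i)) * q (\<sigma> j) + (\<Prod>i<j. q (\<sigma> i)) * p (\<sigma> j)" by simp
qed

definition Kset :: "nat \<Rightarrow> real \<Rightarrow> (nat \<Rightarrow> real) set" where
  "Kset b \<epsilon> = PiE UNIV (\<lambda>i. if i < b then {\<epsilon>..1} else {0}) \<inter> {f. (\<Sum>i<b. f i) = 1}"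

lemma le_one: "p \<in> prob_vecs b \<Longrightarrow> i < b \<Longrightarrow> p i \<le> 1"
proof -
  assume p: "p \<in> prob_vecs b" and i: "i < b"
  have "p i \<le> (\<Sum>i<b. p i)" using p i unfolding prob_vecs_def
    by (intro member_le_sum) auto
  then show ?thesis using p unfolding prob_vecs_def by simp
qed

lemma Rb_K: "p \<in> prob_vecs_eps b \<epsilon> \<Longrightarrow> Rb b p \<in> Kset b \<epsilon>"
  unfolding Kset_def prob_vecs_eps_def
  using le_one[of p b] by (auto simp: Rb_def prob_vecs_def)

lemma K_F: "0 \<le> \<epsilon> \<Longrightarrow> Kset b \<epsilon> \<subseteq> prob_vecs_eps b \<epsilon>"
proof
  fix x assume e: "0 \<le> \<epsilon>" and x: "x \<in> Kset b \<epsilon>"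
  have "\<forall>i<b. \<epsilon> \<le> x i"
  proof (intro allI impI)
    fix i assume "i < b"
    then have "x i \<in> {\<epsilon>..1}" using x by (auto simp: Kset_def PiE_iff dest: spec[of _ i])
    then show "\<epsilon> \<le> x i" by simp
  qed
  then show "x \<in> prob_vecs_eps b \<epsilon>" using x e unfolding Kset_def prob_vecs_eps_def prob_vecs_def
    by (auto intro: order_trans)
qed

lemma compact_K: "compact (Kset b \<epsilon>)"
proof -
  have "compactin (product_topology (\<lambda>i. euclidean) UNIV) (PiE UNIV (\<lambda>i. if i < b then {\<epsilon>..1::real} else {0}))"
    by (subst compactin_PiE) auto
  then have c1: "compact (PiE UNIV (\<lambda>i. if i < b then {\<epsilon>..1::real} else {0}))"
    by (simp add: euclidean_product_topology)
  have "continuous_on UNIV (\<lambda>f::nat\<Rightarrow>real. \<Sum>i<b. f i)"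
    by (intro continuous_on_sum) simp
  then have "closed {f::nat\<Rightarrow>real. (\<Sum>i<b. f i) = 1}"
    by (intro closed_Collect_eq) auto
  then show ?thesis unfolding Kset_def using c1 by (rule compact_Int_closed[rotated])
qed

lemma cont_fst_coord: "continuous_on S (\<lambda>z::(nat\<Rightarrow>real)\<times>(nat\<Rightarrow>real). fst z x)"
proof -
  have "continuous_on UNIV ((\<lambda>f::nat\<Rightarrow>real. f x) \<circ> fst)"
    by (intro continuous_on_compose continuous_on_fst continuous_on_id) simp
  then show ?thesis unfolding comp_def by (rule continuous_on_subset) simp
qed

lemma cont_snd_coord: "continuous_on S (\<lambda>z::(nat\<Rightarrow>real)\<times>(nat\<Rightarrow>real). snd z x)"
proof -
  have "continuous_on UNIV ((\<lambda>f::nat\<Rightarrow>real. f x) \<circ> snd)"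
    by (intro continuous_on_compose continuous_on_snd continuous_on_id) simp
  then show ?thesis unfolding comp_def by (rule continuous_on_subset) simp
qed

lemma cont_Psi: "continuous_on S (\<lambda>z. Psi b j (fst z) (snd z))"
  unfolding Psi_def
  by (intro continuous_intros cont_fst_coord cont_snd_coord)

lemma max_exists:
  assumes "0 < \<epsilon>" "\<epsilon> < 1 / real b" "j < b"
  shows "\<exists>p q. ismax b j \<epsilon> p q"
proof -
  have b0: "0 < b" using assms(3) by simp
  define u where "u = (\<lambda>i::nat. if i < b then 1 / real b else 0)"
  have "u \<in> Kset b \<epsilon>" using assms b0 by (auto simp: Kset_def u_def PiE_iff)
  then have ne: "Kset b \<epsilon> \<times> Kset b \<epsilon> \<noteq> {}" by blast
  obtain z where z: "z \<in> Kset b \<epsilon> \<times> Kset b \<epsilon>"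
    "\<forall>y\<in>Kset b \<epsilon> \<times> Kset b \<epsilon>. Psi b j (fst y) (snd y) \<le> Psi b j (fst z) (snd z)"
    using continuous_attains_sup[OF compact_Times[OF compact_K compact_K] ne cont_Psi] by blast
  have "ismax b j \<epsilon> (fst z) (snd z)"
    unfolding ismax_def
  proof (intro conjI allI impI)
    show "fst z \<in> prob_vecs_eps b \<epsilon>" "snd z \<in> prob_vecs_eps b \<epsilon>"
      using z(1) K_F[of \<epsilon> b] assms(1) by auto
    fix p' q' assume "p' \<in> prob_vecs_eps b \<epsilon>" "q' \<in> prob_vecs_eps b \<epsilon>"
    then have "(Rb b p', Rb b q') \<in> Kset b \<epsilon> \<times> Kset b \<epsilon>" by (simp add: Rb_K)
    then have "Psi b j (Rb b p') (Rb b q') \<le> Psi b j (fst z) (snd z)" using z(2) by force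
    then show "Psi b j p' q' \<le> Psi b j (fst z) (snd z)" using Psi_Rb[OF assms(3)] by simp
  qed
  then show ?thesis by blast
qed

lemma ismax_M1hat:
  assumes "ismax b j \<epsilon> p q"
  shows "M1hat b j \<epsilon> = Psi b j p q"
  unfolding M1hat_def
proof (rule cSup_eq_maximum)
  show "Psi b j p q \<in> (\<lambda>pq. Psi b j (fst pq) (snd pq)) ` (prob_vecs_eps b \<epsilon> \<times> prob_vecs_eps b \<epsilon>)"
    using assms unfolding ismax_def by (auto intro!: image_eqI[of _ _ "(p,q)"])
  fix x assume "x \<in> (\<lambda>pq. Psi b j (fst pq) (snd pq)) ` (prob_vecs_eps b \<epsilon> \<times> prob_vecs_eps b \<epsilon>)"
  then show "x \<le> Psi b j p q" using assms unfolding ismax_def by auto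
qed



lemma sum_block3_gen:
  "(\<Sum>i<n. block3 l1 l2 x y z i) = real (min n l1) * x + real (min n (l1+l2) - min n l1) * y
      + real (n - min n (l1+l2)) * z"
proof (induction n)
  case 0 then show ?case by simp
next
  case (Suc n)
  show ?case
  proof (cases "n < l1")
    case True then show ?thesis using Suc by (simp add: block3_def min_def algebra_simps)
  next
    case False
    show ?thesis
    proof (cases "n < l1 + l2")
      case True
      have m: "min n l1 = l1" "min (Suc n) l1 = l1" "min n (l1+l2) = n" "min (Suc n) (l1+l2) = Suc n"
        using True False by auto
      show ?thesis using Suc False True unfolding m by (simp add: block3_def algebra_simps of_nat_diff)
    next
      case False2: False
      have m: "min n l1 = l1" "min (Suc n) l1 = l1" "min n (l1+l2) = l1+l2" "min (Suc n) (l1+l2) = l1+l2"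
        using False2 False by auto
      show ?thesis using Suc False False2 unfolding m by (simp add: block3_def algebra_simps of_nat_diff Suc_diff_le)
    qed
  qed
qed

lemma sum_block3:
  "l1 + l2 \<le> b \<Longrightarrow> (\<Sum>i<b. block3 l1 l2 x y z i) = real l1 * x + real l2 * y + real (b - l1 - l2) * z"
  by (simp add: sum_block3_gen min_def)



theorem mainTheorem14:
  fixes b j :: nat and \<epsilon> :: real
  assumes "b \<ge> 3" and "2 \<le> j" and "j \<le> b - 1" and "0 < \<epsilon>" and "\<epsilon> < 1 / real b"
  shows "\<exists>p q. p \<in> prob_vecs_eps b \<epsilon> \<and> q \<in> prob_vecs_eps b \<epsilon> \<and>
           Psi b j p q = M1hat b j \<epsilon> \<and>
           (\<exists>\<sigma> l1 l2 \<alpha> \<beta> \<delta> \<eta>. \<sigma> permutes {..<b} \<and> l1 + l2 \<le> b \<and>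
              \<alpha> \<ge> \<epsilon> \<and> \<beta> \<ge> \<epsilon> \<and> \<delta> \<ge> \<epsilon> \<and> \<eta> \<ge> \<epsilon> \<and>
              real l1 * \<epsilon> + real l2 * \<alpha> + real (b - l1 - l2) * \<beta> = 1 \<and>
              real l1 * \<delta> + real l2 * \<epsilon> + real (b - l1 - l2) * \<eta> = 1 \<and>
              ((\<forall>i<b. p (\<sigma> i) = block3 l1 l2 \<epsilon> \<alpha> \<beta> i \<and> q (\<sigma> i) = block3 l1 l2 \<delta> \<epsilon> \<eta> i) \<or>
               (\<forall>i<b. q (\<sigma> i) = block3 l1 l2 \<epsilon> \<alpha> \<beta> i \<and> p (\<sigma> i) = block3 l1 l2 \<delta> \<epsilon> \<eta> i)))"
proof -
  have jb: "j < b" using assms(1,3) by linarith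
  obtain p0 q0 where "ismax b j \<epsilon> p0 q0" using max_exists[OF assms(4,5) jb] by blast
  then obtain pq where pq: "ismax b j \<epsilon> (fst pq) (snd pq)"
    and mn: "\<forall>y. ismax b j \<epsilon> (fst y) (snd y) \<longrightarrow> icard b \<epsilon> (fst pq) (snd pq) \<le> icard b \<epsilon> (fst y) (snd y)"
    using ex_has_least_nat[of "\<lambda>y. ismax b j \<epsilon> (fst y) (snd y)" "(p0,q0)" "\<lambda>y. icard b \<epsilon> (fst y) (snd y)"]
    by auto
  define p where "p = fst pq"
  define q where "q = snd pq"
  have mx: "ismax b j \<epsilon> p q" using pq by (simp add: p_def q_def)
  have mn': "\<forall>p' q'. ismax b j \<epsilon> p' q' \<longrightarrow> icard b \<epsilon> p q \<le> icard b \<epsilon> p' q'"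
    using mn unfolding p_def q_def by (metis fst_conv snd_conv)
  have pF: "p \<in> prob_vecs_eps b \<epsilon>" and qF: "q \<in> prob_vecs_eps b \<epsilon>" using mx by (auto simp: ismax_def)
  have pge: "\<And>i. i < b \<Longrightarrow> \<epsilon> \<le> p i" and qge: "\<And>i. i < b \<Longrightarrow> \<epsilon> \<le> q i"
    using pF qF by (auto simp: prob_vecs_eps_def)
  have psum: "(\<Sum>i<b. p i) = 1" and qsum: "(\<Sum>i<b. q i) = 1"
    using pF qF by (auto simp: prob_vecs_eps_def prob_vecs_def)
  define B1 where "B1 = {i\<in>{..<b}. p i = \<epsilon>}"
  define B2 where "B2 = {i\<in>{..<b}. p i \<noteq> \<epsilon> \<and> q i = \<epsilon>}"
  define B3 where "B3 = {i\<in>{..<b}. p i \<noteq> \<epsilon> \<and> q i \<noteq> \<epsilon>}"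
  define l1 where "l1 = card B1"
  define l2 where "l2 = card B2"
  have fin: "finite B1" "finite B2" "finite B3" by (simp_all add: B1_def B2_def B3_def)
  have U: "B1 \<union> B2 \<union> B3 = {..<b}" by (auto simp: B1_def B2_def B3_def)
  have D: "B1 \<inter> B2 = {}" "(B1 \<union> B2) \<inter> B3 = {}" by (auto simp: B1_def B2_def B3_def)
  have cU: "l1 + l2 + card B3 = b"
  proof -
    have "card (B1 \<union> B2 \<union> B3) = card (B1 \<union> B2) + card B3" using fin D by (intro card_Un_disjoint) auto
    also have "card (B1 \<union> B2) = l1 + l2" using fin D by (simp add: card_Un_disjoint l1_def l2_def)
    finally show ?thesis using U by simp
  qed
  then have l12: "l1 + l2 \<le> b" by simp
  obtain f1 where f1: "bij_betw f1 {..<l1} B1"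
    using finite_same_card_bij[of "{..<l1}" B1] fin by (auto simp: l1_def)
  obtain f2 where f2: "bij_betw f2 {l1..<l1+l2} B2"
    using finite_same_card_bij[of "{l1..<l1+l2}" B2] fin by (auto simp: l2_def)
  obtain f3 where f3: "bij_betw f3 {l1+l2..<b} B3"
    using finite_same_card_bij[of "{l1+l2..<b}" B3] fin cU by auto
  define \<sigma> where "\<sigma> = (\<lambda>i. if i < l1 then f1 i else if i < l1+l2 then f2 i else if i < b then f3 i else i)"
  have s1: "bij_betw \<sigma> {..<l1} B1" using f1 by (rule bij_betw_cong[THEN iffD1, rotated]) (simp add: \<sigma>_def)
  have s2: "bij_betw \<sigma> {l1..<l1+l2} B2" using f2 by (rule bij_betw_cong[THEN iffD1, rotated]) (simp add: \<sigma>_def)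
  have s3: "bij_betw \<sigma> {l1+l2..<b} B3" using f3 by (rule bij_betw_cong[THEN iffD1, rotated]) (simp add: \<sigma>_def)
  have "bij_betw \<sigma> ({..<l1} \<union> {l1..<l1+l2} \<union> {l1+l2..<b}) (B1 \<union> B2 \<union> B3)"
    by (intro bij_betw_combine s1 s2 s3 D)
  moreover have "{..<l1} \<union> {l1..<l1+l2} \<union> {l1+l2..<b} = {..<b}" using l12 by auto
  ultimately have sb: "bij_betw \<sigma> {..<b} {..<b}" using U by simp
  have sp: "\<sigma> permutes {..<b}" by (rule bij_imp_permutes[OF sb]) (use l12 in \<open>auto simp: \<sigma>_def\<close>)
  have in1: "\<sigma> i \<in> B1" if "i < l1" for i using s1 that by (auto dest: bij_betwE)
  have in2: "\<sigma> i \<in> B2" if "l1 \<le> i" "i < l1+l2" for i using s2 that by (auto dest: bij_betwE)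
  have in3: "\<sigma> i \<in> B3" if "l1+l2 \<le> i" "i < b" for i using s3 that by (auto dest: bij_betwE)
  have e1: "q x = q y" if "x \<in> B1" "y \<in> B1" for x y
  proof (cases "x = y")
    case False then show ?thesis using that block1[OF mx assms(4) assms(2) jb, of x y] by (auto simp: B1_def)
  qed simp
  have e2: "p x = p y" if "x \<in> B2" "y \<in> B2" for x y
  proof (cases "x = y")
    case False then show ?thesis using that block2[OF mx assms(4) assms(2) jb, of x y] by (auto simp: B2_def)
  qed simp
  have e3: "p x = p y \<and> q x = q y" if "x \<in> B3" "y \<in> B3" for x y
  proof (cases "x = y")
    case False
    have "\<epsilon> < p x" "\<epsilon> < p y" "\<epsilon> < q x" "\<epsilon> < q y"
      using that pge qge by (auto simp: B3_def order.order_iff_strict)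
    then show ?thesis using that False block3[OF mx mn' assms(4), of x y] by (auto simp: B3_def)
  qed simp
  define \<delta> where "\<delta> = (if 0 < l1 then q (\<sigma> 0) else \<epsilon>)"
  define \<alpha> where "\<alpha> = (if 0 < l2 then p (\<sigma> l1) else \<epsilon>)"
  define \<beta> where "\<beta> = (if l1 + l2 < b then p (\<sigma> (l1+l2)) else \<epsilon>)"
  define \<eta> where "\<eta> = (if l1 + l2 < b then q (\<sigma> (l1+l2)) else \<epsilon>)"
  have sbl: "\<sigma> i < b" if "i < b" for i using sb that by (auto dest: bij_betwE)
  have b0: "0 < b" using assms(1) by simp
  have ge: "\<alpha> \<ge> \<epsilon>" "\<beta> \<ge> \<epsilon>" "\<delta> \<ge> \<epsilon>" "\<eta> \<ge> \<epsilon>"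
  proof -
    show "\<alpha> \<ge> \<epsilon>" unfolding \<alpha>_def using pge[OF sbl[of l1]] l12 by simp
    show "\<beta> \<ge> \<epsilon>" unfolding \<beta>_def using pge[OF sbl[of "l1+l2"]] by simp
    show "\<delta> \<ge> \<epsilon>" unfolding \<delta>_def using qge[OF sbl[of 0]] b0 by simp
    show "\<eta> \<ge> \<epsilon>" unfolding \<eta>_def using qge[OF sbl[of "l1+l2"]] by simp
  qed
  have blk: "\<forall>i<b. p (\<sigma> i) = block3 l1 l2 \<epsilon> \<alpha> \<beta> i \<and> q (\<sigma> i) = block3 l1 l2 \<delta> \<epsilon> \<eta> i"
  proof (intro allI impI)
    fix i assume ib: "i < b"
    show "p (\<sigma> i) = block3 l1 l2 \<epsilon> \<alpha> \<beta> i \<and> q (\<sigma> i) = block3 l1 l2 \<delta> \<epsilon> \<eta> i"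
    proof (cases "i < l1")
      case True
      then have m: "\<sigma> i \<in> B1" "\<sigma> 0 \<in> B1" using in1 by auto
      have "p (\<sigma> i) = \<epsilon>" using m(1) by (simp add: B1_def)
      moreover have "q (\<sigma> i) = \<delta>" using e1[OF m] True by (simp add: \<delta>_def)
      ultimately show ?thesis using True by (simp add: block3_def)
    next
      case F1: False
      show ?thesis
      proof (cases "i < l1 + l2")
        case True
        then have m: "\<sigma> i \<in> B2" "\<sigma> l1 \<in> B2" using in2 F1 by auto
        have "q (\<sigma> i) = \<epsilon>" using m(1) by (simp add: B2_def)
        moreover have "p (\<sigma> i) = \<alpha>" using e2[OF m] True F1 by (simp add: \<alpha>_def)
        ultimately show ?thesis using True F1 by (simp add: block3_def)
      next
        case False
        then have m: "\<sigma> i \<in> B3" "\<sigma> (l1+l2) \<in> B3" using in3 ib by auto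
        have lt: "l1 + l2 < b" using False ib by simp
        have "p (\<sigma> i) = \<beta>" "q (\<sigma> i) = \<eta>" using e3[OF m] lt by (simp_all add: \<beta>_def \<eta>_def)
        then show ?thesis using False F1 by (simp add: block3_def)
      qed
    qed
  qed
  have sums: "(\<Sum>i<b. p (\<sigma> i)) = 1" "(\<Sum>i<b. q (\<sigma> i)) = 1"
    using sum.reindex_bij_betw[OF sb, of p] sum.reindex_bij_betw[OF sb, of q] psum qsum by simp_all
  have S1: "real l1 * \<epsilon> + real l2 * \<alpha> + real (b - l1 - l2) * \<beta> = 1"
    using sums(1) blk sum_block3[OF l12, of \<epsilon> \<alpha> \<beta>] by simp
  have S2: "real l1 * \<delta> + real l2 * \<epsilon> + real (b - l1 - l2) * \<eta> = 1"
    using sums(2) blk sum_block3[OF l12, of \<delta> \<epsilon> \<eta>] by simp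
  show ?thesis
    apply (rule exI[of _ p], rule exI[of _ q])
    apply (intro conjI pF qF ismax_M1hat[OF mx, symmetric])
    apply (rule exI[of _ \<sigma>], rule exI[of _ l1], rule exI[of _ l2], rule exI[of _ \<alpha>], rule exI[of _ \<beta>],
           rule exI[of _ \<delta>], rule exI[of _ \<eta>])
    using sp l12 ge S1 S2 blk by simp
qed


end
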